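(* Let $\mathcal{L}_{\rm TM}$ be the Thue–Morse language and let ${\rm S}:\mathcal{L}_{\rm TM}\to\mathbb{N}$ be a homomorphism. Put $p={\rm S}(a)$, $q={\rm S}(b)$. Then $${\rm S}(\mathcal{L}_{\rm TM})=\big(R_{p+q,0}\cup R_{p+q,p}\cup R_{p+q,q}\cup R_{p+q,2p}\cup R_{p+q,2q}\big)\setminus\{0\}.$$
   Context: $\mathbb{N}=\{1,2,3,\dots\}$. Let $\theta$ be the Thue–Morse morphism on $\{a,b\}$, $\theta(a)=ab$, $\theta(b)=ba$. The Thue–Morse language $\mathcal{L}_{\rm TM}$ is the set of all nonempty finite words occurring as factors of $\theta^n(a)$ for some $n\ge0$ (equivalently, of the infinite Thue–Morse word $\theta^\infty(a)=abbabaab\cdots$). A homomorphism ${\rm S}:\mathcal{L}_{\rm TM}\to\mathbb{N}$ is a map with ${\rm S}(w_1\cdots w_n)={\rm S}(w_1)+\cdots+{\rm S}(w_n)$, determined by ${\rm S}(a),{\rm S}(b)\in\mathbb{N}$. For integers $r\ge1$, $s\ge0$, $R_{r,s}=\{s,\ r+s,\ 2r+s,\dots\}=\{rn+s: n\ge0\}$. *)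

theory Defs
  imports Main "HOL-Library.Sublist"
begin

datatype letter = La | Lb

fun tm_letter :: "letter \<Rightarrow> letter list" where
  "tm_letter La = [La, Lb]"
| "tm_letter Lb = [Lb, La]"

definition theta :: "letter list \<Rightarrow> letter list" where
  "theta w = concat (map tm_letter w)"

definition TM_lang :: "letter list set" where
  "TM_lang = {w. w \<noteq> [] \<and> (\<exists>n. sublist w ((theta ^^ n) [La]))}"

definition hom_S :: "nat \<Rightarrow> nat \<Rightarrow> letter list \<Rightarrow> nat" where
  "hom_S p q w = sum_list (map (\<lambda>c. case c of La \<Rightarrow> p | Lb \<Rightarrow> q) w)"

definition R :: "nat \<Rightarrow> nat \<Rightarrow> nat set" where
  "R r s = {r * n + s | n. True}"

end

theory Submission
  imports Defs
begin

fun flip :: "letter \<Rightarrow> letter" where "flip La = Lb" | "flip Lb = La"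

function tm :: "nat \<Rightarrow> letter" where
  "tm n = (if n = 0 then La else if even n then tm (n div 2) else flip (tm (n div 2)))"
  by auto
termination by (relation "measure id") auto

declare tm.simps[simp del]

lemma tm0: "tm 0 = La" by (subst tm.simps) simp
lemma tm_even: "tm (2*n) = tm n"
proof (cases "n=0")
  case False then show ?thesis by (subst tm.simps) simp
qed simp
lemma tm_odd: "tm (Suc (2*n)) = flip (tm n)"
  by (subst tm.simps) simp

lemma tm1: "tm 1 = Lb" by (subst tm.simps) (simp add: tm0)
lemma tm1': "tm (Suc 0) = Lb" using tm1 by simp
lemma tm2: "tm 2 = Lb" by (subst tm.simps) (simp add: tm1')
lemma tm3: "tm 3 = La" by (subst tm.simps) (simp add: tm1')
lemma tm5: "tm 5 = La" by (subst tm.simps) (simp add: tm2)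
lemma tm6: "tm 6 = La" by (subst tm.simps) (simp add: tm3)

lemma theta_map: "theta (map tm [0..<m]) = map tm [0..<2*m]"
proof (induction m)
  case 0 then show ?case by (simp add: theta_def)
next
  case (Suc m)
  have "tm_letter (tm m) = [tm (2*m), tm (Suc (2*m))]"
    by (cases "tm m") (simp_all add: tm_even tm_odd)
  then show ?case using Suc by (simp add: theta_def)
qed

lemma theta_pow: "(theta ^^ n) [La] = map tm [0..<2^n]"
  by (induction n) (simp_all add: tm0 theta_map)

lemma sublist_tm: "sublist w (map tm [0..<N]) \<Longrightarrow> \<exists>i. w = map tm [i..<i + length w]"
proof -
  assume "sublist w (map tm [0..<N])"
  then obtain ps ss where h: "map tm [0..<N] = ps @ w @ ss" by (auto simp: sublist_def)
  have len: "N = length ps + length w + length ss" using arg_cong[OF h, of length] by simp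
  have "w = take (length w) (drop (length ps) (map tm [0..<N]))" using h by simp
  also have "\<dots> = map tm [length ps..<length ps + length w]"
    using len by (simp add: take_map drop_map)
  finally show ?thesis by blast
qed

lemma tm_sublist: "i + L \<le> N \<Longrightarrow> sublist (map tm [i..<i+L]) (map tm [0..<N])"
proof -
  assume a: "i + L \<le> N"
  have 1: "[0..<N] = [0..<i] @ [i..<N]" using upt_add_eq_append[of 0 i "N-i"] a by simp
  have 2: "[i..<N] = [i..<i+L] @ [i+L..<N]" using upt_add_eq_append[of i "i+L" "N-i-L"] a by simp
  have "[0..<N] = [0..<i] @ [i..<i+L] @ [i+L..<N]" using 1 2 by simp
  then have "map tm [0..<N] = map tm [0..<i] @ map tm [i..<i+L] @ map tm [i+L..<N]" by simp
  then show ?thesis unfolding sublist_def by blast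
qed

lemma inlang: "L \<ge> 1 \<Longrightarrow> map tm [i..<i+L] \<in> TM_lang"
  unfolding TM_lang_def
  apply (simp add: theta_pow)
  apply (rule exI[of _ "i+L"])
  apply (rule tm_sublist)
  by (simp add: less_imp_le)

definition val :: "nat \<Rightarrow> nat \<Rightarrow> letter \<Rightarrow> nat" where
  "val p q c = (case c of La \<Rightarrow> p | Lb \<Rightarrow> q)"
definition P :: "nat \<Rightarrow> nat \<Rightarrow> nat \<Rightarrow> nat" where
  "P p q n = (\<Sum>j<n. val p q (tm j))"

lemma P_even: "P p q (2*m) = m*(p+q)"
proof (induction m)
  case 0 then show ?case by (simp add: P_def)
next
  case (Suc m)
  have e: "2 * Suc m = Suc (Suc (2*m))" by simp
  have "val p q (tm (2*m)) + val p q (tm (Suc (2*m))) = p + q"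
    by (cases "tm m") (simp_all add: tm_even tm_odd val_def)
  then show ?case using Suc unfolding e by (simp add: P_def)
qed

lemma P_odd: "P p q (Suc (2*m)) = m*(p+q) + val p q (tm m)"
  using P_even[of p q m] by (simp add: P_def tm_even)

lemma hom_seg: "hom_S p q (map tm [i..<i+L]) + P p q i = P p q (i+L)"
proof (induction L)
  case 0 then show ?case by (simp add: hom_S_def)
next
  case (Suc L)
  have "hom_S p q (map tm [i..<i+Suc L]) = hom_S p q (map tm [i..<i+L]) + val p q (tm (i+L))"
    by (simp add: hom_S_def val_def)
  then show ?case using Suc by (simp add: P_def)
qed

lemma SE: "(d \<ge> 1 \<longrightarrow> (\<exists>i. tm i = La \<and> tm (i+d) = Lb) \<and> (\<exists>i. tm i = Lb \<and> tm (i+d) = La))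
   \<and> (\<exists>i. tm i = La \<and> tm (i+d) = La) \<and> (\<exists>i. tm i = Lb \<and> tm (i+d) = Lb)"
proof (induction d rule: less_induct)
  case (less d)
  have "d = 0 \<or> (\<exists>e. d = 2*e \<and> e \<ge> 1) \<or> (\<exists>e. d = Suc (2*e))" by presburger
  moreover
  { assume "d = 0"
    then have ?case using tm0 tm1 by auto }
  moreover
  { fix e assume d: "d = 2*e" "e \<ge> 1"
    then have "e < d" by simp
    note IH = less[OF this]
    have kk: "tm (2*i + 2*e) = tm (i+e)" for i using tm_even[of "i+e"] by (simp add: distrib_left)
    have ?case
    proof (intro conjI impI)
      from IH d obtain i where "tm i = La \<and> tm (i+e) = Lb" by auto
      then show "\<exists>i. tm i = La \<and> tm (i+d) = Lb"
        using kk[of i] tm_even[of i] d(1) by (intro exI[of _ "2*i"]) argo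
      from IH d obtain i where "tm i = Lb \<and> tm (i+e) = La" by auto
      then show "\<exists>i. tm i = Lb \<and> tm (i+d) = La"
        using kk[of i] tm_even[of i] d(1) by (intro exI[of _ "2*i"]) argo
      from IH d obtain i where "tm i = La \<and> tm (i+e) = La" by auto
      then show "\<exists>i. tm i = La \<and> tm (i+d) = La"
        using kk[of i] tm_even[of i] d(1) by (intro exI[of _ "2*i"]) argo
      from IH d obtain i where "tm i = Lb \<and> tm (i+e) = Lb" by auto
      then show "\<exists>i. tm i = Lb \<and> tm (i+d) = Lb"
        using kk[of i] tm_even[of i] d(1) by (intro exI[of _ "2*i"]) argo
    qed }
  moreover
  { fix e assume d: "d = Suc (2*e)"
    then have "e < d" by simp
    note IH = less[OF this]
    have ko: "tm (2*i + d) = flip (tm (i+e))" for i using tm_odd[of "i+e"] d by (simp add: distrib_left)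
    have ?case
    proof (intro conjI impI)
      from IH obtain i where "tm i = La \<and> tm (i+e) = La" by auto
      then show "\<exists>i. tm i = La \<and> tm (i+d) = Lb"
        by (intro exI[of _ "2*i"]) (simp add: ko tm_even)
      from IH obtain i where "tm i = Lb \<and> tm (i+e) = Lb" by auto
      then show "\<exists>i. tm i = Lb \<and> tm (i+d) = La"
        by (intro exI[of _ "2*i"]) (simp add: ko tm_even)
      show "\<exists>i. tm i = La \<and> tm (i+d) = La"
      proof (cases "e = 0")
        case True then show ?thesis using d tm5 tm6 by (intro exI[of _ 5]) simp
      next
        case False
        from IH False obtain i where "tm i = La \<and> tm (i+e) = Lb" by auto
        then show ?thesis
          by (intro exI[of _ "2*i"]) (simp add: ko tm_even)
      qed
      show "\<exists>i. tm i = Lb \<and> tm (i+d) = Lb"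
      proof (cases "e = 0")
        case True then show ?thesis using d tm1 tm2[unfolded numeral_2_eq_2] by (intro exI[of _ 1]) simp
      next
        case False
        from IH False obtain i where "tm i = Lb \<and> tm (i+e) = La" by auto
        then show ?thesis
          by (intro exI[of _ "2*i"]) (simp add: ko tm_even)
      qed
    qed }
  ultimately show ?case by blast
qed

lemma memR: "x = r*n + s \<Longrightarrow> x \<in> R r s" by (auto simp: R_def)


abbreviation U :: "nat \<Rightarrow> nat \<Rightarrow> nat set" where
  "U p q \<equiv> R (p + q) 0 \<union> R (p + q) p \<union> R (p + q) q \<union> R (p + q) (2 * p) \<union> R (p + q) (2 * q)"

lemma val_cases: "val p q c = p \<and> c = La \<or> val p q c = q \<and> c = Lb"
  by (cases c) (auto simp: val_def)

lemma classify:
  assumes p: "p \<ge> 1" and q: "q \<ge> 1" and ij: "i < j" and xe: "x + P p q i = P p q j"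
  shows "x \<in> U p q - {0}"
proof -
  define a where "a = i div 2"
  have ia: "i = 2*a \<or> i = Suc (2*a)" unfolding a_def by arith
  define b where "b = j div 2"
  have jb: "j = 2*b \<or> j = Suc (2*b)" unfolding b_def by arith
  show ?thesis
  proof (cases "i = 2*a")
    case ie: True
    show ?thesis
    proof (cases "j = 2*b")
      case je: True
      then have "a < b" using ie ij by linarith
      then obtain n where b: "b = a + Suc n" by (metis add_Suc_right less_imp_Suc_add)
      have "x + a*(p+q) = b*(p+q)" using xe ie je by (simp add: P_even)
      then have x: "x = (p+q)*Suc n + 0" unfolding b by (simp add: algebra_simps val_def)
      then show ?thesis using memR[OF x] p by auto
    next
      case jo: False
      then have jo: "j = Suc (2*b)" using jb by simp
      then have "a \<le> b" using ie ij by linarith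
      then obtain n where b: "b = a + n" using le_Suc_ex by blast
      have xx: "x + a*(p+q) = b*(p+q) + val p q (tm b)" using xe ie jo by (simp add: P_even P_odd)
      show ?thesis using val_cases[of p q "tm b"]
      proof
        assume "val p q (tm b) = p \<and> tm b = La"
        then have x: "x = (p+q)*n + p" using xx unfolding b by (simp add: algebra_simps val_def)
        then show ?thesis using memR[OF x] p by auto
      next
        assume "val p q (tm b) = q \<and> tm b = Lb"
        then have x: "x = (p+q)*n + q" using xx unfolding b by (simp add: algebra_simps val_def)
        then show ?thesis using memR[OF x] q by auto
      qed
    qed
  next
    case io: False
    then have io: "i = Suc (2*a)" using ia by simp
    show ?thesis
    proof (cases "j = 2*b")
      case je: True
      then have "a < b" using io ij by linarith
      then obtain n where b: "b = a + Suc n" by (metis add_Suc_right less_imp_Suc_add)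
      have xx: "x + a*(p+q) + val p q (tm a) = b*(p+q)" using xe io je by (simp add: P_even P_odd)
      show ?thesis using val_cases[of p q "tm a"]
      proof
        assume "val p q (tm a) = p \<and> tm a = La"
        then have x: "x = (p+q)*n + q" using xx unfolding b by (simp add: algebra_simps val_def)
        then show ?thesis using memR[OF x] q by auto
      next
        assume "val p q (tm a) = q \<and> tm a = Lb"
        then have x: "x = (p+q)*n + p" using xx unfolding b by (simp add: algebra_simps val_def)
        then show ?thesis using memR[OF x] p by auto
      qed
    next
      case jo: False
      then have jo: "j = Suc (2*b)" using jb by simp
      then have "a < b" using io ij by linarith
      then obtain n where b: "b = a + Suc n" by (metis add_Suc_right less_imp_Suc_add)
      have xx: "x + a*(p+q) + val p q (tm a) = b*(p+q) + val p q (tm b)"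
        using xe io jo by (simp add: P_odd)
      show ?thesis using val_cases[of p q "tm a"] val_cases[of p q "tm b"]
      proof (elim disjE conjE)
        assume "val p q (tm a) = p" "val p q (tm b) = p"
        then have x: "x = (p+q)*Suc n + 0" using xx unfolding b by (simp add: algebra_simps val_def)
        then show ?thesis using memR[OF x] p by auto
      next
        assume "val p q (tm a) = q" "val p q (tm b) = q"
        then have x: "x = (p+q)*Suc n + 0" using xx unfolding b by (simp add: algebra_simps val_def)
        then show ?thesis using memR[OF x] p by auto
      next
        assume "val p q (tm a) = q" "val p q (tm b) = p"
        then have x: "x = (p+q)*n + 2*p" using xx unfolding b by (simp add: algebra_simps val_def)
        then show ?thesis using memR[OF x] p by auto
      next
        assume "val p q (tm a) = p" "val p q (tm b) = q"
        then have x: "x = (p+q)*n + 2*q" using xx unfolding b by (simp add: algebra_simps val_def)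
        then show ?thesis using memR[OF x] q by auto
      qed
    qed
  qed
qed

lemma seg_val: "i \<le> j \<Longrightarrow> hom_S p q (map tm [i..<j]) + P p q i = P p q j"
  using hom_seg[of p q i "j - i"] by simp

lemma realize: "i < j \<Longrightarrow> x + P p q i = P p q j \<Longrightarrow> x \<in> hom_S p q ` TM_lang"
proof -
  assume ij: "i < j" and xe: "x + P p q i = P p q j"
  have "hom_S p q (map tm [i..<j]) = x" using seg_val[of i j p q] ij xe by simp
  moreover have "map tm [i..<j] \<in> TM_lang" using inlang[of "j-i" i] ij by simp
  ultimately show ?thesis by (metis image_eqI)
qed

theorem theorem7:
  fixes p q :: nat
  assumes "p \<ge> 1" and "q \<ge> 1"
  shows "hom_S p q ` TM_lang =
    (R (p + q) 0 \<union> R (p + q) p \<union> R (p + q) q \<union> R (p + q) (2 * p) \<union> R (p + q) (2 * q)) - {0}"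
proof
  show "hom_S p q ` TM_lang \<subseteq> U p q - {0}"
  proof
    fix x assume "x \<in> hom_S p q ` TM_lang"
    then obtain w where w: "w \<in> TM_lang" and x: "x = hom_S p q w" by blast
    from w obtain n where ne: "w \<noteq> []" and sl: "sublist w ((theta^^n)[La])"
      by (auto simp: TM_lang_def)
    then obtain i where wi: "w = map tm [i..<i + length w]" using sublist_tm theta_pow by metis
    have L1: "length w \<ge> 1" using ne by (cases w) auto
    have "x + P p q i = P p q (i + length w)" using hom_seg[of p q i "length w"] wi x by metis
    then show "x \<in> U p q - {0}" using classify[OF assms, of i "i + length w" x] L1 ne by simp
  qed
next
  show "U p q - {0} \<subseteq> hom_S p q ` TM_lang"
  proof
    fix x assume xU: "x \<in> U p q - {0}"
    have Pe: "\<And>m. P p q (2*m) = m*(p+q)" by (rule P_even)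
    have Po: "\<And>m. P p q (Suc (2*m)) = m*(p+q) + val p q (tm m)" by (rule P_odd)
    have P0: "P p q 0 = 0" by (simp add: P_def)
    consider (c0) k where "x = (p+q)*k + 0" "k \<noteq> 0" | (cp) k where "x = (p+q)*k + p"
      | (cq) k where "x = (p+q)*k + q" | (c2p) k where "x = (p+q)*k + 2*p"
      | (c2q) k where "x = (p+q)*k + 2*q"
      using xU unfolding R_def by auto
    then show "x \<in> hom_S p q ` TM_lang"
    proof cases
      case c0
      show ?thesis
        by (rule realize[of 0 "2*k"]) (use c0 Pe[of k] P0 in \<open>auto simp: algebra_simps\<close>)
    next
      case cp
      show ?thesis
      proof (cases "tm k")
        case La
        show ?thesis
          by (rule realize[of 0 "Suc (2*k)"]) (use cp Po[of k] P0 La in \<open>auto simp: algebra_simps val_def\<close>)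
      next
        case Lb
        have "P p q 3 = (p+q) + q" using Po[of 1] tm1 by (simp add: val_def)
        moreover have "P p q (2*(k+2)) = (k+2)*(p+q)" by (rule Pe)
        ultimately show ?thesis
          by (intro realize[of 3 "2*(k+2)"]) (use cp in \<open>auto simp: algebra_simps\<close>)
      qed
    next
      case cq
      show ?thesis
      proof (cases "tm k")
        case Lb
        show ?thesis
          by (rule realize[of 0 "Suc (2*k)"]) (use cq Po[of k] P0 Lb in \<open>auto simp: algebra_simps val_def\<close>)
      next
        case La
        have "P p q 1 = p" using Po[of 0] tm0 by (simp add: val_def)
        moreover have "P p q (2*(k+1)) = (k+1)*(p+q)" by (rule Pe)
        ultimately show ?thesis
          by (intro realize[of 1 "2*(k+1)"]) (use cq in \<open>auto simp: algebra_simps\<close>)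
      qed
    next
      case c2p
      obtain i where i: "tm i = Lb" "tm (i + (k+1)) = La" using SE[of "k+1"] by auto
      have "P p q (Suc (2*i)) = i*(p+q) + q" using Po[of i] i by (simp add: val_def)
      moreover have "P p q (Suc (2*(i+(k+1)))) = (i+(k+1))*(p+q) + p" using Po[of "i+(k+1)"] i by (simp add: val_def)
      ultimately show ?thesis
        by (intro realize[of "Suc (2*i)" "Suc (2*(i+(k+1)))"]) (use c2p in \<open>auto simp: algebra_simps\<close>)
    next
      case c2q
      obtain i where i: "tm i = La" "tm (i + (k+1)) = Lb" using SE[of "k+1"] by auto
      have "P p q (Suc (2*i)) = i*(p+q) + p" using Po[of i] i by (simp add: val_def)
      moreover have "P p q (Suc (2*(i+(k+1)))) = (i+(k+1))*(p+q) + q" using Po[of "i+(k+1)"] i by (simp add: val_def)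
      ultimately show ?thesis
        by (intro realize[of "Suc (2*i)" "Suc (2*(i+(k+1)))"]) (use c2q in \<open>auto simp: algebra_simps\<close>)
    qed
  qed
qed

end
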